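(* Let $G$ be a planar PCC graph and let $\sigma,\sigma',\kappa$ be faces with $|\sigma|,|\sigma'|\ge 20$ and $|\kappa|\le 6$. Let $e,e'$ be edges on the boundary of $\kappa$ such that $e$ lies on the boundary of $\sigma$ and $e'$ lies on the boundary of $\sigma'$. Then $\sigma=\sigma'$ and $e=e'$.
   Context: $G$ is a finite simple connected graph 2-cell embedded in the sphere; $|\sigma|$ denotes the length of the boundary walk of a face $\sigma$; for a vertex $v$, $F(v)$ is the multiset of faces incident to $v$ (one per corner) and $K(v)=1-\frac{\deg(v)}{2}+\sum_{\sigma\in F(v)}\frac1{|\sigma|}$. A prism (resp. antiprism) of order $N$ is the planar graph with $2N$ vertices, two $N$-faces and $N$ quadrilaterals (resp. $2N$ triangles), each vertex incident to two quadrilaterals and one $N$-face (resp. three triangles and one $N$-face). A planar PCC graph is such a $G$ with $K(v)>0$, $\deg(v)\ge3$ for all $v$, not a prism or antiprism. *)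

theory Defs
  imports Complex_Main
begin

text \<open>
  A finite connected graph 2-cell embedded in an orientable surface is encoded, as usual,
  by a combinatorial map (rotation system) on a finite set D of darts (half-edges):
  alpha is the fixed-point-free involution pairing the two darts of an edge, rho is the
  rotation permutation (cyclic order of darts around their common tail vertex).  The dart x at vertex v represents the corner (x, rho x) of v, and this
  corner lies in the face containing x.  Hence the length of the boundary walk of a face is
  the number of darts in its orbit, and an edge lies on the boundary of a face iff they share
  a dart.  The embedding is in the sphere iff the map is connected and V - E + F = 2.
\<close>

definition orb :: "('d \<Rightarrow> 'd) \<Rightarrow> 'd \<Rightarrow> 'd set" where
  "orb f x = {(f ^^ n) x | n. True}"

definition face_perm :: "('d \<Rightarrow> 'd) \<Rightarrow> ('d \<Rightarrow> 'd) \<Rightarrow> 'd \<Rightarrow> 'd" where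
  "face_perm alpha rho = alpha \<circ> rho"

definition map_verts :: "'d set \<Rightarrow> ('d \<Rightarrow> 'd) \<Rightarrow> 'd set set" where
  "map_verts D rho = orb rho ` D"

definition map_edges :: "'d set \<Rightarrow> ('d \<Rightarrow> 'd) \<Rightarrow> 'd set set" where
  "map_edges D alpha = orb alpha ` D"

definition map_faces :: "'d set \<Rightarrow> ('d \<Rightarrow> 'd) \<Rightarrow> ('d \<Rightarrow> 'd) \<Rightarrow> 'd set set" where
  "map_faces D alpha rho = orb (face_perm alpha rho) ` D"

definition comb_map :: "'d set \<Rightarrow> ('d \<Rightarrow> 'd) \<Rightarrow> ('d \<Rightarrow> 'd) \<Rightarrow> bool" where
  "comb_map D alpha rho \<longleftrightarrow> finite D \<and> bij_betw rho D D \<and>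
     (\<forall>x\<in>D. alpha x \<in> D \<and> alpha x \<noteq> x \<and> alpha (alpha x) = x)"

definition map_connected :: "'d set \<Rightarrow> ('d \<Rightarrow> 'd) \<Rightarrow> ('d \<Rightarrow> 'd) \<Rightarrow> bool" where
  "map_connected D alpha rho \<longleftrightarrow>
     (\<forall>x\<in>D. \<forall>y\<in>D. (x, y) \<in> ({(z, alpha z) | z. z \<in> D} \<union> {(z, rho z) | z. z \<in> D})\<^sup>*)"

definition map_simple :: "'d set \<Rightarrow> ('d \<Rightarrow> 'd) \<Rightarrow> ('d \<Rightarrow> 'd) \<Rightarrow> bool" where
  "map_simple D alpha rho \<longleftrightarrow>
     (\<forall>x\<in>D. orb rho (alpha x) \<noteq> orb rho x) \<and>
     (\<forall>x\<in>D. \<forall>y\<in>D. orb rho x = orb rho y \<and> orb rho (alpha x) = orb rho (alpha y)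
                     \<longrightarrow> orb alpha x = orb alpha y)"

definition spherical_simple_map :: "'d set \<Rightarrow> ('d \<Rightarrow> 'd) \<Rightarrow> ('d \<Rightarrow> 'd) \<Rightarrow> bool" where
  "spherical_simple_map D alpha rho \<longleftrightarrow>
     comb_map D alpha rho \<and> D \<noteq> {} \<and> map_connected D alpha rho \<and> map_simple D alpha rho \<and>
     int (card (map_verts D rho)) - int (card (map_edges D alpha))
       + int (card (map_faces D alpha rho)) = 2"

text \<open>deg v = number of darts at v; the face at the corner of dart x is orb phi x.\<close>
definition curv :: "('d \<Rightarrow> 'd) \<Rightarrow> ('d \<Rightarrow> 'd) \<Rightarrow> 'd set \<Rightarrow> real" where
  "curv alpha rho v = 1 - real (card v) / 2
     + (\<Sum>x\<in>v. 1 / real (card (orb (face_perm alpha rho) x)))"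

definition is_prism :: "'d set \<Rightarrow> ('d \<Rightarrow> 'd) \<Rightarrow> ('d \<Rightarrow> 'd) \<Rightarrow> bool" where
  "is_prism D alpha rho \<longleftrightarrow> (\<exists>N A. N \<ge> 3 \<and> A \<subseteq> map_faces D alpha rho \<and> card A = 2 \<and>
     (\<forall>f\<in>A. card f = N) \<and>
     card (map_faces D alpha rho - A) = N \<and>
     (\<forall>f\<in>map_faces D alpha rho - A. card f = 4) \<and>
     card (map_verts D rho) = 2 * N \<and>
     (\<forall>v\<in>map_verts D rho. card v = 3 \<and>
        card {x\<in>v. orb (face_perm alpha rho) x \<in> A} = 1))"

definition is_antiprism :: "'d set \<Rightarrow> ('d \<Rightarrow> 'd) \<Rightarrow> ('d \<Rightarrow> 'd) \<Rightarrow> bool" where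
  "is_antiprism D alpha rho \<longleftrightarrow> (\<exists>N A. N \<ge> 3 \<and> A \<subseteq> map_faces D alpha rho \<and> card A = 2 \<and>
     (\<forall>f\<in>A. card f = N) \<and>
     card (map_faces D alpha rho - A) = 2 * N \<and>
     (\<forall>f\<in>map_faces D alpha rho - A. card f = 3) \<and>
     card (map_verts D rho) = 2 * N \<and>
     (\<forall>v\<in>map_verts D rho. card v = 4 \<and>
        card {x\<in>v. orb (face_perm alpha rho) x \<in> A} = 1))"

definition planar_PCC :: "'d set \<Rightarrow> ('d \<Rightarrow> 'd) \<Rightarrow> ('d \<Rightarrow> 'd) \<Rightarrow> bool" where
  "planar_PCC D alpha rho \<longleftrightarrow> spherical_simple_map D alpha rho \<and>
     (\<forall>v\<in>map_verts D rho. curv alpha rho v > 0 \<and> card v \<ge> 3) \<and>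
     \<not> is_prism D alpha rho \<and> \<not> is_antiprism D alpha rho"

end

theory Submission
  imports Defs
begin


locale perm_on =
  fixes D :: "'a set" and f :: "'a \<Rightarrow> 'a"
  assumes fin: "finite D" and bij: "bij_betw f D D"
begin

lemma f_in: "x \<in> D \<Longrightarrow> f x \<in> D" using bij bij_betwE by blast
lemma inj: "inj_on f D" using bij bij_betw_def by blast
lemma funpow_in: "x \<in> D \<Longrightarrow> (f^^n) x \<in> D" by (induction n) (auto simp: f_in)
lemma funpow_inj: "x\<in>D \<Longrightarrow> y\<in>D \<Longrightarrow> (f^^n) x = (f^^n) y \<Longrightarrow> x = y"
proof (induction n)
  case (Suc n)
  then show ?case using inj_onD[OF inj, of "(f^^n) x" "(f^^n) y"] funpow_in by auto
qed simp

lemma period_ex: "x\<in>D \<Longrightarrow> \<exists>p>0. (f^^p) x = x"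
proof -
  assume x: "x \<in> D"
  have sub: "(\<lambda>n. (f^^n) x) ` {..card D} \<subseteq> D" using funpow_in x by auto
  have "\<not> inj_on (\<lambda>n. (f^^n) x) {..card D}"
  proof
    assume "inj_on (\<lambda>n. (f^^n) x) {..card D}"
    then have "card {..card D} \<le> card D" using card_inj_on_le[OF _ sub fin] by blast
    then show False by simp
  qed
  then obtain i j where ij: "i \<noteq> j" "(f^^i) x = (f^^j) x" by (auto simp: inj_on_def)
  have "\<exists>i j. i < j \<and> (f^^i) x = (f^^j) x"
    using ij by (metis linorder_neqE_nat)
  then obtain i j where ij2: "i < j" "(f^^i) x = (f^^j) x" by blast
  have "(f^^i) ((f^^(j-i)) x) = (f^^j) x"
    using ij2(1) by (metis funpow_add le_add_diff_inverse less_imp_le o_apply)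
  then have "(f^^(j-i)) x = x" using ij2 funpow_inj[of "(f^^(j-i)) x" x i] funpow_in x by auto
  then show ?thesis using ij2(1) by (intro exI[of _ "j-i"]) auto
qed

definition per where "per x = (LEAST p. 0 < p \<and> (f^^p) x = x)"

lemma per: "x\<in>D \<Longrightarrow> 0 < per x \<and> (f^^per x) x = x"
  unfolding per_def using LeastI_ex[OF period_ex] by blast

lemma per_least: "0<k \<Longrightarrow> (f^^k) x = x \<Longrightarrow> per x \<le> k"
  unfolding per_def by (simp add: Least_le)

lemma funpow_mult_per: "x\<in>D \<Longrightarrow> (f^^(per x * m)) x = x"
proof (induction m)
  case (Suc m)
  have "(f^^(per x * Suc m)) x = (f^^(per x)) ((f^^(per x * m)) x)"
    by (simp add: funpow_add)
  then show ?case using Suc per by simp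
qed simp

lemma funpow_mod: "x\<in>D \<Longrightarrow> (f^^n) x = (f^^(n mod per x)) x"
proof -
  assume x: "x\<in>D"
  have "n = n mod per x + per x * (n div per x)" by simp
  then have "(f^^n) x = (f^^(n mod per x)) ((f^^(per x * (n div per x))) x)"
    by (metis funpow_add o_apply)
  then show ?thesis using funpow_mult_per x by simp
qed

lemma orb_eq: "x\<in>D \<Longrightarrow> orb f x = (\<lambda>i. (f^^i) x) ` {..<per x}"
proof -
  assume x: "x\<in>D"
  show ?thesis
    unfolding orb_def
  proof (auto)
    fix n show "(f^^n) x \<in> (\<lambda>i. (f^^i) x) ` {..<per x}"
      using funpow_mod[OF x, of n] per[OF x] by (auto intro!: image_eqI[of _ _ "n mod per x"])
  qed
qed

lemma inj_per: "x\<in>D \<Longrightarrow> inj_on (\<lambda>i. (f^^i) x) {..<per x}"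
proof (rule inj_onI, rule ccontr)
  fix i j assume x: "x\<in>D" and i: "i \<in> {..<per x}" and j: "j \<in> {..<per x}"
    and eq: "(f^^i) x = (f^^j) x" and ne: "i \<noteq> j"
  { fix i j assume ij: "i < j" "j < per x" "(f^^i) x = (f^^j) x"
    have "(f^^i) ((f^^(j-i)) x) = (f^^j) x"
      using ij(1) by (metis funpow_add le_add_diff_inverse less_imp_le o_apply)
    then have "(f^^(j-i)) x = x" using ij funpow_inj[of "(f^^(j-i)) x" x i] funpow_in x by auto
    then have "per x \<le> j - i" using per_least ij by auto
    then have False using ij by auto }
  then show False using i j eq ne by (metis lessThan_iff linorder_neqE_nat)
qed

lemma card_orb: "x\<in>D \<Longrightarrow> card (orb f x) = per x"
  using orb_eq inj_per card_image by fastforce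

lemma orb_sub: "x\<in>D \<Longrightarrow> orb f x \<subseteq> D"
  unfolding orb_def using funpow_in by auto
lemma finite_orb: "x\<in>D \<Longrightarrow> finite (orb f x)"
  using orb_sub fin finite_subset by blast
lemma self_in: "x \<in> orb f x" unfolding orb_def by (auto intro: exI[of _ 0])
lemma funpow_in_orb: "(f^^n) x \<in> orb f x" unfolding orb_def by auto
lemma f_in_orb: "f x \<in> orb f x" using funpow_in_orb[of 1] by simp

lemma orb_eqI: "x\<in>D \<Longrightarrow> y \<in> orb f x \<Longrightarrow> orb f y = orb f x"
proof -
  assume x: "x\<in>D" and y: "y \<in> orb f x"
  then obtain m where m: "y = (f^^m) x" unfolding orb_def by auto
  show ?thesis
  proof
    show "orb f y \<subseteq> orb f x"
      unfolding orb_def m by (auto simp: funpow_add[symmetric, unfolded comp_def] intro: exI)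
         (metis funpow_add o_apply)
  next
    show "orb f x \<subseteq> orb f y"
    proof
      fix w assume "w \<in> orb f x"
      then obtain n where n: "w = (f^^n) x" unfolding orb_def by auto
      define p where "p = per x"
      have p1: "p \<ge> 1" using per x p_def by (simp add: Suc_leI)
      define c where "c = n + p * m + p - m"
      have "p * m \<ge> m" using p1 by simp
      then have cm0: "c + m = n + (p + p * m)" unfolding c_def by linarith
      then have cm: "c + m = n + p * Suc m" by simp
      have "(f^^c) y = (f^^(c+m)) x" by (simp add: m funpow_add)
      also have "\<dots> = (f^^n) ((f^^(p * Suc m)) x)" using cm by (simp add: funpow_add)
      also have "\<dots> = w" using funpow_mult_per[OF x, of "Suc m"] n p_def by simp
      finally show "w \<in> orb f y" unfolding orb_def by auto
    qed
  qed
qed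

lemma orb_f: "x\<in>D \<Longrightarrow> orb f (f x) = orb f x" using orb_eqI f_in_orb by blast

lemma orb_disj: "x\<in>D \<Longrightarrow> y\<in>D \<Longrightarrow> z \<in> orb f x \<Longrightarrow> z \<in> orb f y \<Longrightarrow> orb f x = orb f y"
  using orb_eqI by metis

lemma orb_mem_eq: "x\<in>D \<Longrightarrow> y\<in>D \<Longrightarrow> y \<in> orb f x \<longleftrightarrow> orb f y = orb f x"
  using orb_eqI self_in by metis

lemma card_sum: "card D = sum card (orb f ` D)"
proof -
  have U: "\<Union>(orb f ` D) = D" using orb_sub self_in by blast
  have "card (\<Union>(orb f ` D)) = sum card (orb f ` D)"
  proof (rule card_Union_disjoint)
    show "pairwise disjnt (orb f ` D)"
      unfolding pairwise_def disjnt_def using orb_disj by blast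
  qed (use finite_orb in auto)
  then show ?thesis using U by simp
qed

definition finv where "finv y = inv_into D f y"

lemma finv_in: "y\<in>D \<Longrightarrow> finv y \<in> D"
  unfolding finv_def by (metis bij bij_betw_def inv_into_into)
lemma f_finv: "y\<in>D \<Longrightarrow> f (finv y) = y"
  unfolding finv_def by (metis bij bij_betw_inv_into_right)
lemma finv_f: "x\<in>D \<Longrightarrow> finv (f x) = x"
  unfolding finv_def by (metis bij bij_betw_inv_into_left)

lemma finv_in_orb: "y\<in>D \<Longrightarrow> finv y \<in> orb f y"
proof -
  assume y: "y\<in>D"
  have "f ((f^^(per y - 1)) y) = (f^^(per y)) y"
    using per[OF y] by (metis Suc_diff_1 funpow.simps(2) o_apply)
  also have "\<dots> = y" using per y by simp
  finally have "(f^^(per y - 1)) y = finv y"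
    using inj_onD[OF inj] f_finv[OF y] finv_in[OF y] funpow_in[OF y] by metis
  then show ?thesis using funpow_in_orb by metis
qed

lemma card_ge3_neq: "x\<in>D \<Longrightarrow> card (orb f x) \<ge> 3 \<Longrightarrow> f x \<noteq> x \<and> f (f x) \<noteq> x"
proof -
  assume x: "x\<in>D" and c: "card (orb f x) \<ge> 3"
  have "per x \<ge> 3" using c card_orb x by simp
  moreover have "f x = x \<Longrightarrow> per x \<le> 1" using per_least[of 1 x] by simp
  moreover have "f (f x) = x \<Longrightarrow> per x \<le> 2" using per_least[of 2 x] by (simp add: eval_nat_numeral)
  ultimately show ?thesis by linarith
qed

lemma card_le: "x\<in>D \<Longrightarrow> 0 < k \<Longrightarrow> (f^^k) x = x \<Longrightarrow> card (orb f x) \<le> k"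
  using card_orb per_least by simp

lemma card_funpow: "x\<in>D \<Longrightarrow> (f^^(card (orb f x))) x = x"
  using card_orb per by simp

end




locale pcc =
  fixes D :: "'d set" and alpha rho :: "'d \<Rightarrow> 'd"
  assumes PCC: "planar_PCC D alpha rho"
begin

abbreviation phi where "phi \<equiv> face_perm alpha rho"

lemma SSM: "spherical_simple_map D alpha rho" using PCC by (simp add: planar_PCC_def)
lemma CM: "comb_map D alpha rho" using SSM by (simp add: spherical_simple_map_def)
lemma fin: "finite D" using CM by (simp add: comb_map_def)
lemma rho_bij: "bij_betw rho D D" using CM by (simp add: comb_map_def)
lemma alpha_in[simp]: "x\<in>D \<Longrightarrow> alpha x \<in> D" using CM by (simp add: comb_map_def)
lemma alpha_ne: "x\<in>D \<Longrightarrow> alpha x \<noteq> x" using CM by (simp add: comb_map_def)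
lemma alpha_alpha[simp]: "x\<in>D \<Longrightarrow> alpha (alpha x) = x" using CM by (simp add: comb_map_def)
lemma rho_in[simp]: "x\<in>D \<Longrightarrow> rho x \<in> D" using rho_bij bij_betwE by blast
lemma phi_eq: "phi x = alpha (rho x)" by (simp add: face_perm_def)
lemma phi_in[simp]: "x\<in>D \<Longrightarrow> phi x \<in> D" by (simp add: phi_eq)
lemma alpha_phi: "x\<in>D \<Longrightarrow> alpha (phi x) = rho x" by (simp add: phi_eq)

lemma alpha_bij: "bij_betw alpha D D"
  by (rule bij_betw_byWitness[of _ alpha]) auto

lemma phi_bij: "bij_betw phi D D"
  unfolding face_perm_def using bij_betw_trans[OF rho_bij alpha_bij] by simp

sublocale R: perm_on D rho using fin rho_bij by unfold_locales
sublocale P: perm_on D phi using fin phi_bij by unfold_locales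
sublocale A: perm_on D alpha using fin alpha_bij by unfold_locales

definition fs where "fs x = card (orb phi x)"
definition dg where "dg x = card (orb rho x)"
abbreviation rho' where "rho' \<equiv> R.finv"
abbreviation phi' where "phi' \<equiv> P.finv"

lemma rho'_in[simp]: "x\<in>D \<Longrightarrow> rho' x \<in> D" using R.finv_in by blast
lemma phi'_in[simp]: "x\<in>D \<Longrightarrow> phi' x \<in> D" using P.finv_in by blast
lemma rho_rho'[simp]: "x\<in>D \<Longrightarrow> rho (rho' x) = x" using R.f_finv by blast
lemma rho'_rho[simp]: "x\<in>D \<Longrightarrow> rho' (rho x) = x" using R.finv_f by blast
lemma phi_phi'[simp]: "x\<in>D \<Longrightarrow> phi (phi' x) = x" using P.f_finv by blast
lemma phi'_phi[simp]: "x\<in>D \<Longrightarrow> phi' (phi x) = x" using P.finv_f by blast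
lemma phi_rho': "x\<in>D \<Longrightarrow> phi (rho' x) = alpha x" by (simp add: phi_eq)

lemma rho_inj: "x\<in>D \<Longrightarrow> y\<in>D \<Longrightarrow> rho x = rho y \<Longrightarrow> x = y"
  using R.inj inj_onD by metis
lemma phi_inj: "x\<in>D \<Longrightarrow> y\<in>D \<Longrightarrow> phi x = phi y \<Longrightarrow> x = y"
  using P.inj inj_onD by metis
lemma alpha_inj: "x\<in>D \<Longrightarrow> y\<in>D \<Longrightarrow> alpha x = alpha y \<Longrightarrow> x = y"
  by (metis alpha_alpha)

lemma fs_phi[simp]: "x\<in>D \<Longrightarrow> fs (phi x) = fs x" unfolding fs_def using P.orb_f by simp
lemma fs_eq: "x\<in>D \<Longrightarrow> y \<in> orb phi x \<Longrightarrow> fs y = fs x" unfolding fs_def using P.orb_eqI by simp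
lemma dg_eq: "x\<in>D \<Longrightarrow> y \<in> orb rho x \<Longrightarrow> dg y = dg x" unfolding dg_def using R.orb_eqI by simp

lemma verts: "x\<in>D \<Longrightarrow> curv alpha rho (orb rho x) > 0 \<and> card (orb rho x) \<ge> 3"
proof -
  assume x: "x\<in>D"
  have v: "orb rho x \<in> map_verts D rho" using x by (simp add: map_verts_def)
  have "\<forall>v\<in>map_verts D rho. curv alpha rho v > 0 \<and> card v \<ge> 3"
    using PCC by (simp add: planar_PCC_def)
  then show ?thesis using v by blast
qed

lemma dg3: "x\<in>D \<Longrightarrow> dg x \<ge> 3" using verts dg_def by simp

lemma orb_alpha: "x\<in>D \<Longrightarrow> orb alpha x = {x, alpha x}"
proof -
  assume x: "x\<in>D"
  have "(alpha^^n) x = (if even n then x else alpha x)" for n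
    by (induction n) (auto simp: x)
  then show ?thesis unfolding orb_def by (auto intro: exI[of _ 0] exI[of _ 1])
qed

lemma MS: "map_simple D alpha rho" using SSM by (simp add: spherical_simple_map_def)
lemma simple1: "x\<in>D \<Longrightarrow> orb rho (alpha x) \<noteq> orb rho x"
  using MS unfolding map_simple_def by blast
lemma simple2: "x\<in>D \<Longrightarrow> y\<in>D \<Longrightarrow> orb rho x = orb rho y \<Longrightarrow> orb rho (alpha x) = orb rho (alpha y)
     \<Longrightarrow> orb alpha x = orb alpha y"
  using MS unfolding map_simple_def by blast

lemma rho_neq: "x\<in>D \<Longrightarrow> rho x \<noteq> x \<and> rho (rho x) \<noteq> x"
  using R.card_ge3_neq dg3 dg_def by simp

lemma fs3: "x\<in>D \<Longrightarrow> fs x \<ge> 3"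
proof -
  assume x: "x\<in>D"
  have n1: "phi x \<noteq> x"
  proof
    assume "phi x = x"
    then have "alpha (rho x) = x" by (simp add: phi_eq)
    then have "rho x = alpha x" using x by (metis alpha_alpha rho_in)
    then have "orb rho (alpha x) = orb rho x" using R.orb_f[OF x] by simp
    then show False using simple1 x by blast
  qed
  have n2: "phi (phi x) \<noteq> x"
  proof
    assume h: "phi (phi x) = x"
    define y where "y = alpha (rho x)"
    have yD: "y \<in> D" using x y_def by simp
    have "alpha (rho y) = x" using h by (simp add: phi_eq y_def)
    then have ry: "rho y = alpha x" using yD by (metis alpha_alpha rho_in)
    have v1: "orb rho x = orb rho (rho x)" using R.orb_f[OF x] by simp
    have v2: "orb rho (alpha x) = orb rho (alpha (rho x))"
      using R.orb_f[OF yD] ry y_def by simp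
    have "orb alpha x = orb alpha (rho x)" using simple2[OF x _ v1 v2] x by simp
    then have "rho x \<in> {x, alpha x}" using orb_alpha[OF x] A.self_in[of "rho x"] by simp
    moreover have "rho x \<noteq> x" using rho_neq x by blast
    moreover have "rho x \<noteq> alpha x"
    proof
      assume "rho x = alpha x"
      then have "orb rho (alpha x) = orb rho x" using R.orb_f[OF x] by simp
      then show False using simple1 x by blast
    qed
    ultimately show False by blast
  qed
  have p: "P.per x > 0" "(phi^^P.per x) x = x" using P.per x by blast+
  have "P.per x \<noteq> 1" using p n1 by auto
  moreover have "P.per x \<noteq> 2" using p n2 by (auto simp: numeral_2_eq_2)
  ultimately show ?thesis unfolding fs_def using P.card_orb x p by simp
qed

lemma curv_sum: "x\<in>D \<Longrightarrow> (\<Sum>y\<in>orb rho x. 1 / real (fs y)) > real (dg x) / 2 - 1"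
  using verts[of x] unfolding curv_def fs_def dg_def by simp

end



lemma inv_le: "0 < k \<Longrightarrow> (k::nat) \<le> n \<Longrightarrow> 1 / real n \<le> 1 / real k"
  by (simp add: frac_le)

lemma inv_gt_imp: "0 < k \<Longrightarrow> 1 / real k < 1 / real (n::nat) \<Longrightarrow> n < k"
  using inv_le[of k n] by (meson not_less order.strict_trans1 order_less_irrefl)

lemma sum_split_bound:
  assumes "finite V" "S \<subseteq> V" "\<And>y. y \<in> V \<Longrightarrow> h y \<le> (1/3::real)"
  shows "sum h V \<le> sum h S + real (card V - card S) / 3"
proof -
  have "sum h V = sum h S + sum h (V - S)"
    using assms(1,2) by (metis add.commute sum.subset_diff)
  moreover have "sum h (V - S) \<le> real (card (V - S)) * (1/3)"
    using sum_bounded_above[of "V - S" h "1/3"] assms(3) by auto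
  moreover have "card (V - S) = card V - card S"
    using assms(1,2) card_Diff_subset finite_subset by blast
  ultimately show ?thesis by simp
qed

context pcc begin

lemma h_le: "y\<in>D \<Longrightarrow> 1 / real (fs y) \<le> 1/3"
  using inv_le[of 3 "fs y"] fs3 by simp

lemma vsum:
  assumes x: "x\<in>D" and S: "S \<subseteq> orb rho x"
  shows "real (dg x) / 2 - 1 < (\<Sum>y\<in>S. 1 / real (fs y)) + real (dg x - card S) / 3"
proof -
  have "(\<Sum>y\<in>orb rho x. 1 / real (fs y)) \<le> (\<Sum>y\<in>S. 1 / real (fs y)) + real (card (orb rho x) - card S) / 3"
    by (rule sum_split_bound[OF R.finite_orb[OF x] S]) (use h_le R.orb_sub[OF x] in blast)
  then show ?thesis using curv_sum[OF x] dg_def by simp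
qed

lemma dg_le5: "x\<in>D \<Longrightarrow> dg x \<le> 5"
  using vsum[of x "{}"] by (simp add: of_nat_diff)

lemma VB:
  assumes x: "x\<in>D" and yz: "y \<in> orb rho x" "z \<in> orb rho x" "y \<noteq> z"
    and b: "fs y \<ge> 20" "fs z \<ge> 20"
  shows False
proof -
  have S: "{y,z} \<subseteq> orb rho x" using yz by auto
  have "real (dg x) / 2 - 1 < 1 / real (fs y) + 1 / real (fs z) + real (dg x - 2) / 3"
    using vsum[OF x S] yz by simp
  moreover have "1 / real (fs y) \<le> 1/20" "1 / real (fs z) \<le> 1/20" using inv_le b by auto
  moreover have "dg x \<ge> 3" using dg3 x by blast
  moreover then have "real (dg x - 2) = real (dg x) - 2" "real (dg x) \<ge> 3" by (simp_all add: of_nat_diff)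
  ultimately show False by linarith
qed

lemma Vbig4:
  assumes x: "x\<in>D" and y: "y \<in> orb rho x" and b: "fs y \<ge> 20"
  shows "dg x \<le> 4"
proof -
  have "real (dg x) / 2 - 1 < 1 / real (fs y) + real (dg x - 1) / 3"
    using vsum[of x "{y}"] x y by simp
  moreover have "1 / real (fs y) \<le> 1/20" using inv_le b by auto
  moreover have "dg x \<ge> 3" using dg3 x by blast
  moreover then have "real (dg x - 1) = real (dg x) - 1" by (simp_all add: of_nat_diff)
  ultimately have "real (dg x) < 5" by linarith
  then show ?thesis by simp
qed

lemma VD:
  assumes x: "x\<in>D" and yz: "y \<in> orb rho x" "z \<in> orb rho x" "y \<noteq> z"
    and b: "fs y \<ge> 20" "fs z \<ge> 4"
  shows "dg x = 3"
proof -
  have S: "{y,z} \<subseteq> orb rho x" using yz by auto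
  have "real (dg x) / 2 - 1 < 1 / real (fs y) + 1 / real (fs z) + real (dg x - 2) / 3"
    using vsum[OF x S] yz by simp
  moreover have "1 / real (fs y) \<le> 1/20" "1 / real (fs z) \<le> 1/4" using inv_le b by auto
  moreover have "dg x \<ge> 3" using dg3 x by blast
  moreover then have "real (dg x - 2) = real (dg x) - 2" by (simp_all add: of_nat_diff)
  ultimately have "real (dg x) < 4" by linarith
  then show ?thesis using \<open>dg x \<ge> 3\<close> by simp
qed

lemma V3sum:
  assumes x: "x\<in>D" and d: "dg x = 3" and yzw: "y \<in> orb rho x" "z \<in> orb rho x" "w \<in> orb rho x"
    "y \<noteq> z" "y \<noteq> w" "z \<noteq> w"
  shows "1 / real (fs y) + 1 / real (fs z) + 1 / real (fs w) > 1/2"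
proof -
  have S: "{y,z,w} \<subseteq> orb rho x" using yzw by auto
  have "real (dg x) / 2 - 1 < 1 / real (fs y) + 1 / real (fs z) + 1 / real (fs w) + real (dg x - 3) / 3"
    using vsum[OF x S] yzw by simp
  then show ?thesis using d by simp
qed

lemma V4sum:
  assumes x: "x\<in>D" and d: "dg x = 4" and yzw: "y \<in> orb rho x" "z \<in> orb rho x" "w \<in> orb rho x"
    "u \<in> orb rho x" "y \<noteq> z" "y \<noteq> w" "z \<noteq> w" "u \<noteq> y" "u \<noteq> z" "u \<noteq> w"
  shows "1 / real (fs y) + 1 / real (fs z) + 1 / real (fs w) + 1 / real (fs u) > 1"
proof -
  have S: "{y,z,w,u} \<subseteq> orb rho x" using yzw by auto
  have "real (dg x) / 2 - 1 < 1 / real (fs y) + 1 / real (fs z) + 1 / real (fs w) + 1 / real (fs u) + real (dg x - 4) / 3"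
    using vsum[OF x S] yzw by (simp add: algebra_simps)
  then show ?thesis using d by simp
qed

lemma V3gen:
  assumes x: "x\<in>D" and yzw: "y \<in> orb rho x" "z \<in> orb rho x" "w \<in> orb rho x"
    "y \<noteq> z" "y \<noteq> w" "z \<noteq> w"
  shows "real (dg x) / 2 - 1 < 1 / real (fs y) + 1 / real (fs z) + 1 / real (fs w) + real (dg x - 3) / 3"
proof -
  have S: "{y,z,w} \<subseteq> orb rho x" using yzw by auto
  show ?thesis using vsum[OF x S] yzw by simp
qed

lemma per_dg: "x\<in>D \<Longrightarrow> R.per x = dg x" using R.card_orb dg_def by simp

lemma dg3_rho: "x\<in>D \<Longrightarrow> dg x = 3 \<Longrightarrow> rho (rho (rho x)) = x"
  using R.per[of x] per_dg by (simp add: eval_nat_numeral)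
lemma dg4_rho: "x\<in>D \<Longrightarrow> dg x = 4 \<Longrightarrow> rho (rho (rho (rho x))) = x"
  using R.per[of x] per_dg by (simp add: eval_nat_numeral)

lemma dg4_neq: "x\<in>D \<Longrightarrow> dg x = 4 \<Longrightarrow> rho (rho (rho x)) \<noteq> x"
  using R.per_least[of 3 x] per_dg by (force simp: eval_nat_numeral)

lemma rho_orb: "rho x \<in> orb rho x" using R.f_in_orb .
lemma rho2_orb: "rho (rho x) \<in> orb rho x" using R.funpow_in_orb[of 2 x] by (simp add: eval_nat_numeral)
lemma rho3_orb: "rho (rho (rho x)) \<in> orb rho x" using R.funpow_in_orb[of 3 x] by (simp add: eval_nat_numeral)
lemma rho'_orb: "x\<in>D \<Longrightarrow> rho' x \<in> orb rho x" using R.finv_in_orb .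

lemma fs_alpha_rho': "x\<in>D \<Longrightarrow> fs (rho' x) = fs (alpha x)"
  using fs_phi[of "rho' x"] phi_rho' by simp

lemma lemC:
  assumes w: "w\<in>D" and b: "fs (alpha w) \<ge> 20" "fs (alpha (phi w)) \<ge> 20"
  shows False
proof -
  have "fs (rho' w) \<ge> 20" using fs_alpha_rho' w b by simp
  moreover have "fs (rho w) \<ge> 20" using alpha_phi w b by simp
  moreover have "rho' w \<noteq> rho w"
  proof
    assume "rho' w = rho w" then have "rho (rho w) = w" using w by (metis rho_rho')
    then show False using rho_neq w by blast
  qed
  ultimately show False using VB[OF w rho'_orb[OF w] rho_orb] by blast
qed

lemma lemD:
  assumes z: "z\<in>D" and b: "fs (alpha z) \<ge> 20" and k: "fs z \<ge> 4"
  shows "rho (rho z) = rho' z \<and> 1 / real (fs (alpha z)) + 1 / real (fs z) + 1 / real (fs (rho z)) > 1/2"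
proof -
  have ne1: "rho' z \<noteq> z" using rho_neq z by (metis rho_rho')
  have d: "dg z = 3" using VD[OF z rho'_orb[OF z] R.self_in ne1] fs_alpha_rho' z b k by simp
  have r3: "rho (rho (rho z)) = z" using dg3_rho z d by blast
  then have r2: "rho (rho z) = rho' z" using z by (metis R.finv_f rho_in)
  have ne2: "rho' z \<noteq> rho z"
  proof
    assume "rho' z = rho z"
    then have "rho (rho z) = rho z" using r2 by simp
    then have "rho z = z" using rho_inj z by (metis rho_in)
    then show False using rho_neq z by blast
  qed
  have ne3: "z \<noteq> rho z" using rho_neq z by metis
  have "1 / real (fs (rho' z)) + 1 / real (fs z) + 1 / real (fs (rho z)) > 1/2"
    using V3sum[OF z d rho'_orb[OF z] R.self_in rho_orb ne1 ne2 ne3] .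
  then show ?thesis using r2 fs_alpha_rho' z by simp
qed

lemma lemD':
  assumes c: "c\<in>D" and b: "fs (alpha (phi c)) \<ge> 20" and k: "fs c \<ge> 4"
  shows "rho (rho (rho c)) = c \<and> 1 / real (fs (alpha (phi c))) + 1 / real (fs c) + 1 / real (fs (alpha c)) > 1/2"
proof -
  have ne1: "rho c \<noteq> c" using rho_neq c by metis
  have d: "dg c = 3" using VD[OF c rho_orb R.self_in ne1] alpha_phi c b k by simp
  have r3: "rho (rho (rho c)) = c" using dg3_rho c d by blast
  have ne2: "rho c \<noteq> rho (rho c)" using rho_neq c by (metis rho_in)
  have ne3: "c \<noteq> rho (rho c)" using rho_neq c by metis
  have f: "fs (rho (rho c)) = fs (alpha c)" using fs_phi[of "rho (rho c)"] c r3 by (simp add: phi_eq)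
  have "1 / real (fs (rho c)) + 1 / real (fs c) + 1 / real (fs (rho (rho c))) > 1/2"
    using V3sum[OF c d rho_orb R.self_in rho2_orb ne1 ne2 ne3] .
  then show ?thesis using r3 f alpha_phi c by simp
qed

end



context pcc begin

lemma alpha_swap: "x\<in>D \<Longrightarrow> alpha x = y \<Longrightarrow> x = alpha y" by auto

lemma fs_per: "x\<in>D \<Longrightarrow> (phi^^(fs x)) x = x" using P.card_funpow fs_def by simp
lemma fs3_phi: "x\<in>D \<Longrightarrow> fs x = 3 \<Longrightarrow> phi (phi (phi x)) = x"
  using fs_per[of x] by (simp add: eval_nat_numeral)
lemma fs4_phi: "x\<in>D \<Longrightarrow> fs x = 4 \<Longrightarrow> phi (phi (phi (phi x))) = x"
  using fs_per[of x] by (simp add: eval_nat_numeral)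
lemma fs5_phi: "x\<in>D \<Longrightarrow> fs x = 5 \<Longrightarrow> phi (phi (phi (phi (phi x)))) = x"
  using fs_per[of x] by (simp add: eval_nat_numeral)
lemma fs6_phi: "x\<in>D \<Longrightarrow> fs x = 6 \<Longrightarrow> phi (phi (phi (phi (phi (phi x))))) = x"
  using fs_per[of x] by (simp add: eval_nat_numeral)

lemma lemE:
  assumes z: "z\<in>D" and k: "fs z \<ge> 4" and b0: "fs (alpha z) \<ge> 20" and b2: "fs (alpha (phi (phi z))) \<ge> 20"
  shows "fs (rho z) \<noteq> 3"
proof
  assume t3: "fs (rho z) = 3"
  have r2: "rho (rho z) = rho' z" using lemD[OF z b0 k] by blast
  define t0 where "t0 = rho z"
  define t1 where "t1 = phi t0"
  have t0D: "t0 \<in> D" and t1D: "t1 \<in> D" using z t0_def t1_def by auto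
  have t1e: "t1 = alpha (rho' z)" using r2 by (simp add: t1_def t0_def phi_eq)
  have bt1: "fs (alpha t1) \<ge> 20" using t1e z fs_alpha_rho' b0 by simp
  have pz: "phi z \<in> D" using z by simp
  have r3: "rho (rho (rho (phi z))) = phi z" using lemD'[OF pz] b2 k z by simp
  define tm where "tm = rho (rho (phi z))"
  have tmD: "tm \<in> D" using z tm_def by simp
  have ptm: "phi tm = t0" using r3 z by (simp add: tm_def phi_eq t0_def)
  have atm: "alpha tm = phi (alpha (phi (phi z)))"
    using z by (simp add: tm_def phi_eq)
  have btm: "fs (alpha tm) \<ge> 20" using atm b2 z by simp
  have "phi (phi (phi t0)) = t0" using fs3_phi t0D t3 t0_def by simp
  then have "phi (phi t1) = phi tm" using ptm t1_def by simp
  then have "phi t1 = tm" using phi_inj[of "phi t1" tm] t1D tmD by simp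
  then show False using lemC[OF t1D bt1] btm by simp
qed

lemma lemP:
  assumes z: "z\<in>D" and k: "fs z \<ge> 5" and b0: "fs (alpha z) \<ge> 20" and b2: "fs (alpha (phi (phi z))) \<ge> 20"
  shows False
proof -
  have ineq: "1 / real (fs (alpha z)) + 1 / real (fs z) + 1 / real (fs (rho z)) > 1/2"
    using lemD[OF z b0] k by simp
  have "1 / real (fs (alpha z)) \<le> 1/20" "1 / real (fs z) \<le> 1/5" using inv_le b0 k by auto
  then have "1 / 4 < 1 / real (fs (rho z))" using ineq by linarith
  then have "fs (rho z) < 4" using inv_gt_imp[of 4 "fs (rho z)"] by simp
  then have "fs (rho z) = 3" using fs3[of "rho z"] z by simp
  then show False using lemE[OF z _ b0 b2] k by simp
qed

lemma small3:
  assumes "1 / real a + 1 / real b + 1 / real c > 1/2" "a \<ge> 20" "b \<ge> 5" "c \<ge> 3"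
  shows "c = 3"
proof -
  have "1 / real a \<le> 1/20" "1 / real b \<le> 1/5" using inv_le assms by auto
  then have "1 / 4 < 1 / real c" using assms(1) by linarith
  then have "c < 4" using inv_gt_imp[of 4 c] by simp
  then show ?thesis using assms by simp
qed

lemma lemH:
  assumes x: "x\<in>D" and k: "fs x = 6" and b0: "fs (alpha x) \<ge> 20"
    and b3: "fs (alpha (phi (phi (phi x)))) \<ge> 20"
  shows "phi (phi (phi (alpha (phi (phi (phi x)))))) = alpha x \<or>
         phi (phi (phi (phi (alpha (phi (phi (phi x))))))) = alpha x"
proof -
  define b1 where "b1 = phi x"
  define b2 where "b2 = phi b1"
  define b3 where "b3 = phi b2"
  have bD: "b1 \<in> D" "b2 \<in> D" "b3 \<in> D" using x by (auto simp: b1_def b2_def b3_def)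
  have fb: "fs b1 = 6" "fs b2 = 6" using k x by (auto simp: b1_def b2_def)
  have B3: "fs (alpha b3) \<ge> 20" using b3 by (simp add: b1_def b2_def b3_def)
  have DX: "rho (rho x) = rho' x" and ix: "1 / real (fs (alpha x)) + 1 / real (fs x) + 1 / real (fs (rho x)) > 1/2"
    using lemD[OF x b0] k by auto
  have frx: "fs (rho x) = 3" using small3[OF ix b0] k fs3[of "rho x"] x by simp
  define t0 where "t0 = rho x"
  define t1 where "t1 = phi t0"
  define t2 where "t2 = phi t1"
  have tD: "t0 \<in> D" "t1 \<in> D" "t2 \<in> D" using x by (auto simp: t0_def t1_def t2_def)
  have pt2: "phi t2 = t0" using fs3_phi[OF tD(1)] frx by (simp add: t0_def t1_def t2_def)
  have t1e: "t1 = alpha (rho' x)" using DX by (simp add: t1_def t0_def phi_eq)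
  have at1: "alpha t1 = rho' x" using t1e x by simp
  have bigt1: "fs (rho' t1) \<ge> 20" using fs_alpha_rho'[OF tD(2)] at1 fs_alpha_rho'[OF x] b0 by simp
  have DB2: "rho (rho (rho b2)) = b2" and ib2: "1 / real (fs (alpha (phi b2))) + 1 / real (fs b2) + 1 / real (fs (alpha b2)) > 1/2"
    using lemD'[OF bD(2)] B3 fb by (auto simp: b3_def)
  have fab2: "fs (alpha b2) = 3" using small3[OF ib2] B3 fb fs3[of "alpha b2"] bD by (simp add: b3_def)
  define u where "u = rho (rho b2)"
  have uD: "u \<in> D" using bD u_def by simp
  have pu: "phi u = alpha b2" using DB2 by (simp add: u_def phi_eq)
  have rb2: "rho b2 = alpha b3" using alpha_phi[OF bD(2)] by (simp add: b3_def)
  have au: "alpha u = phi (alpha b3)" using rb2 by (simp add: u_def phi_eq)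
  have bigau: "fs (alpha u) \<ge> 20" using au B3 bD by simp
  have fu: "fs u = 3" using fab2 pu fs_phi[OF uD] by simp
  have p3u: "phi (phi (phi u)) = u" using fs3_phi[OF uD fu] .
  have rt2: "rho t2 = b1"
  proof -
    have "alpha (rho t2) = rho x" using pt2 by (simp add: phi_eq t0_def)
    then show ?thesis using tD x by (metis alpha_alpha phi_eq rho_in b1_def)
  qed
  have rb1: "rho b1 = alpha b2" using alpha_phi[OF bD(1)] by (simp add: b2_def)
  have ft2: "fs t2 = 3" using frx tD by (simp add: t2_def t1_def t0_def)
  have rt1: "rho t1 = alpha t2"
  proof -
    have "alpha (rho t1) = t2" by (simp add: t2_def phi_eq)
    then show ?thesis using tD by (metis alpha_alpha rho_in)
  qed
  have ne_t2: "t2 \<noteq> rho t2" "t2 \<noteq> rho (rho t2)" "rho t2 \<noteq> rho (rho t2)"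
    using rho_neq tD by (metis rho_in)+
  have V3: "real (dg t2) / 2 - 1 < 1 / real (fs t2) + 1 / real (fs (rho t2)) + 1 / real (fs (rho (rho t2))) + real (dg t2 - 3) / 3"
    using V3gen[OF tD(3) R.self_in rho_orb rho2_orb ne_t2] .
  have "real (dg t2) < 5"
  proof -
    have "fs (rho t2) = 6" "fs (rho (rho t2)) = 3" using rt2 rb1 fb fab2 by simp_all
    moreover have "dg t2 \<ge> 3" using dg3 tD by blast
    moreover then have "real (dg t2 - 3) = real (dg t2) - 3" by (simp add: of_nat_diff)
    ultimately have "real (dg t2) / 2 - 1 < 5/6 + (real (dg t2) - 3)/3" using V3 ft2 by simp
    then show ?thesis by (simp add: field_simps)
  qed
  then have dgt2: "dg t2 = 3 \<or> dg t2 = 4" using dg3[OF tD(3)] by linarith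
  show ?thesis
  proof (cases "dg t2 = 3")
    case True
    have "rho (rho (rho t2)) = t2" using dg3_rho tD True by blast
    then have r_ab2: "rho (alpha b2) = t2" using rt2 rb1 by simp
    have p_ab2: "phi (alpha b2) = alpha t2" using r_ab2 by (simp add: phi_eq)
    have p_at2: "phi (alpha t2) = u" using p3u pu p_ab2 by simp
    have r_at2: "rho (alpha t2) = alpha u"
    proof -
      have "alpha (rho (alpha t2)) = u" using p_at2 by (simp add: phi_eq)
      then show ?thesis using tD by (metis alpha_alpha rho_in alpha_in)
    qed
    have rrt1: "rho (rho t1) = alpha u" using rt1 r_at2 by simp
    have "alpha u = rho' t1"
    proof (rule ccontr)
      assume "alpha u \<noteq> rho' t1"
      then show False using VB[OF tD(2) rho'_orb[OF tD(2)] rho2_orb[of t1]] rrt1 bigt1 bigau by simp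
    qed
    then have "phi (alpha u) = rho' x" using phi_rho'[OF tD(2)] at1 by simp
    then have "phi (phi (alpha u)) = alpha x" using phi_rho'[OF x] by simp
    then have "phi (phi (phi (alpha b3))) = alpha x" using au by simp
    then show ?thesis by (simp add: b1_def b2_def b3_def)
  next
    case False
    then have d4: "dg t2 = 4" using dgt2 by simp
    define y where "y = rho (alpha b2)"
    have yD: "y \<in> D" using bD y_def by simp
    have r4: "rho (rho (rho (rho t2))) = t2" using dg4_rho tD d4 by blast
    have ry: "rho y = t2" using r4 rt2 rb1 by (simp add: y_def)
    have y3: "y = rho (rho (rho t2))" using rt2 rb1 by (simp add: y_def)
    have ney: "y \<noteq> t2" "y \<noteq> rho t2" "y \<noteq> rho (rho t2)"
    proof -
      show "y \<noteq> t2" using y3 dg4_neq tD d4 by simp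
      show "y \<noteq> rho t2"
      proof
        assume "y = rho t2"
        then have "rho (rho t2) = t2" using y3 rho_inj tD by (metis rho_in)
        then show False using rho_neq tD by blast
      qed
      show "y \<noteq> rho (rho t2)"
      proof
        assume "y = rho (rho t2)"
        then have "rho t2 = t2" using y3 rho_inj tD by (metis rho_in)
        then show False using rho_neq tD by blast
      qed
    qed
    have "1 / real (fs t2) + 1 / real (fs (rho t2)) + 1 / real (fs (rho (rho t2))) + 1 / real (fs y) > 1"
      using V4sum[OF tD(3) d4 R.self_in rho_orb rho2_orb _ ne_t2] ney y3 rho3_orb[of t2] by simp
    then have "1 / 6 < 1 / real (fs y)" using rt2 rb1 fb fab2 ft2 by simp
    then have fy5: "fs y < 6" using inv_gt_imp[of 6 "fs y"] by simp
    have py: "phi y = alpha t2" using ry by (simp add: phi_eq)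
    define m2 where "m2 = alpha y"
    have m2D: "m2 \<in> D" using yD m2_def by simp
    have pab2: "phi (alpha b2) = m2" by (simp add: phi_eq m2_def y_def)
    have pm2: "phi m2 = u" using p3u pu pab2 by simp
    have rm2: "rho m2 = alpha u"
    proof -
      have "alpha (rho m2) = u" using pm2 by (simp add: phi_eq)
      then show ?thesis using m2D by (metis alpha_alpha rho_in)
    qed
    have prm2: "phi (rho' m2) = y" using phi_rho'[OF m2D] yD by (simp add: m2_def)
    have fat2: "fs (alpha t2) = fs y" using py fs_phi[OF yD] by simp
    have frm2: "fs (rho' m2) = fs y" using prm2 fs_phi[of "rho' m2"] m2D by simp
    show ?thesis
    proof (cases "fs y \<ge> 4")
      case True
      have ne1: "rho' t1 \<noteq> rho t1" using bigt1 rt1 fat2 fy5 by auto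
      have "dg t1 = 3" using VD[OF tD(2) rho'_orb[OF tD(2)] rho_orb ne1 bigt1] rt1 fat2 True by simp
      then have "rho (rho (rho t1)) = t1" using dg3_rho tD by blast
      then have "rho (rho t1) = rho' t1" using tD by (metis R.finv_f rho_in)
      then have r_at2: "rho (alpha t2) = rho' t1" using rt1 by simp
      define a where "a = alpha (rho' t1)"
      have aD: "a \<in> D" using tD a_def by simp
      have ppy: "phi (phi y) = a" using py r_at2 by (simp add: phi_eq a_def)
      have biga: "fs (alpha a) \<ge> 20" using bigt1 tD by (simp add: a_def)
      have ne2: "rho m2 \<noteq> rho' m2" using rm2 bigau frm2 fy5 by auto
      have "dg m2 = 3" using VD[OF m2D rho_orb rho'_orb[OF m2D] ne2] rm2 bigau frm2 True by simp
      then have "rho (rho (rho m2)) = m2" using dg3_rho m2D by blast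
      then have "rho (rho m2) = rho' m2" using m2D by (metis R.finv_f rho_in)
      then have r_au: "rho (alpha u) = rho' m2" using rm2 by simp
      define w where "w = rho' m2"
      have wD: "w \<in> D" using m2D w_def by simp
      have aw: "alpha w = phi (alpha u)" using r_au by (simp add: w_def phi_eq)
      have bigw: "fs (alpha w) \<ge> 20" using aw bigau uD by simp
      have pw: "phi w = y" using prm2 w_def by simp
      have fw: "fs w = fs y" using frm2 w_def by simp
      show ?thesis
      proof (cases "fs y = 4")
        case True
        have "phi (phi (phi (phi w))) = w" using fs4_phi[OF wD] fw True by simp
        then have "phi a = w" using pw ppy by simp
        then show ?thesis using lemC[OF aD biga] bigw by simp
      next
        case False
        then have f5: "fs y = 5" using fy5 \<open>fs y \<ge> 4\<close> by simp
        have "phi (phi (phi (phi (phi w)))) = w" using fs5_phi[OF wD] fw f5 by simp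
        then have "phi (phi a) = w" using pw ppy by simp
        moreover have "fs a = 5" using ppy f5 yD fs_phi by (metis phi_in)
        ultimately show ?thesis using lemP[OF aD _ biga] bigw by simp
      qed
    next
      case False
      then have fy3: "fs y = 3" using fs3[OF yD] by simp
      define g where "g = phi (phi y)"
      have gD: "g \<in> D" using yD g_def by simp
      have pg: "phi g = y" using fs3_phi[OF yD fy3] g_def by simp
      have rm2g: "rho' m2 = g" using prm2 pg phi_inj[OF _ gD] m2D by (metis rho'_in)
      have g2: "g = phi (alpha t2)" using py g_def by simp
      have dt1: "dg t1 = 3 \<or> dg t1 = 4" using Vbig4[OF tD(2) rho'_orb[OF tD(2)] bigt1] dg3[OF tD(2)] by linarith
      have dm2: "dg m2 = 3 \<or> dg m2 = 4" using Vbig4[OF m2D rho_orb] rm2 bigau dg3[OF m2D] by fastforce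
      have P3: "alpha g = rho' t1" if d3: "dg t1 = 3"
      proof -
        have "rho (rho (rho t1)) = t1" using dg3_rho tD d3 by blast
        then have "rho (rho t1) = rho' t1" using tD by (metis R.finv_f rho_in)
        then have "rho (alpha t2) = rho' t1" using rt1 by simp
        then show ?thesis using g2 tD by (simp add: phi_eq)
      qed
      have P4: "fs (alpha g) = 3 \<and> phi (alpha g) = alpha (rho' t1)" if d4': "dg t1 = 4"
      proof -
        define r1 where "r1 = rho (alpha t2)"
        have r1D: "r1 \<in> D" using tD r1_def by simp
        have r1e: "r1 = rho (rho t1)" using rt1 r1_def by simp
        have "rho (rho (rho (rho t1))) = t1" using dg4_rho tD d4' by blast
        then have rr1: "rho r1 = rho' t1" using r1e tD by (metis R.finv_f rho_in)
        have ne: "rho' t1 \<noteq> r1" using rr1 rho_neq r1D by metis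
        have "fs r1 < 4"
        proof (rule ccontr)
          assume "\<not> fs r1 < 4"
          moreover have "r1 \<in> orb rho t1" using r1e rho2_orb by simp
          ultimately have "dg t1 = 3" using VD[OF tD(2) rho'_orb[OF tD(2)] _ ne bigt1] by simp
          then show False using d4' by simp
        qed
        then have "fs r1 = 3" using fs3[OF r1D] by simp
        moreover have "alpha g = r1" using g2 tD by (simp add: phi_eq r1_def)
        moreover have "phi r1 = alpha (rho' t1)" using rr1 by (simp add: phi_eq)
        ultimately show ?thesis by simp
      qed
      have Q3: "alpha g = phi (alpha u)" if d3: "dg m2 = 3"
      proof -
        have "rho (rho (rho m2)) = m2" using dg3_rho m2D d3 by blast
        then have "rho (rho m2) = rho' m2" using m2D by (metis R.finv_f rho_in)
        then have "rho (alpha u) = g" using rm2 rm2g by simp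
        then show ?thesis using uD by (simp add: phi_eq)
      qed
      have Q4: "\<exists>r2. r2 \<in> D \<and> fs r2 = 3 \<and> phi r2 = alpha g \<and> alpha r2 = phi (alpha u)" if d4': "dg m2 = 4"
      proof -
        define r2 where "r2 = rho (alpha u)"
        have r2D: "r2 \<in> D" using uD r2_def by simp
        have r2e: "r2 = rho (rho m2)" using rm2 r2_def by simp
        have "rho (rho (rho (rho m2))) = m2" using dg4_rho m2D d4' by blast
        then have rr2: "rho r2 = rho' m2" using r2e m2D by (metis R.finv_f rho_in)
        have ne: "rho m2 \<noteq> r2" using r2e rho_neq m2D by (metis rho_in)
        have "fs r2 < 4"
        proof (rule ccontr)
          assume "\<not> fs r2 < 4"
          moreover have "r2 \<in> orb rho m2" using r2e rho2_orb by simp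
          moreover have "fs (rho m2) \<ge> 20" using rm2 bigau by simp
          ultimately have "dg m2 = 3" using VD[OF m2D rho_orb _ ne] by simp
          then show False using d4' by simp
        qed
        then have "fs r2 = 3" using fs3[OF r2D] by simp
        moreover have "phi r2 = alpha g" using rr2 rm2g by (simp add: phi_eq)
        moreover have "alpha r2 = phi (alpha u)" by (simp add: r2_def phi_eq)
        ultimately show ?thesis using r2D by blast
      qed
      show ?thesis
      proof (cases "dg t1 = 3")
        case T1: True
        show ?thesis
        proof (cases "dg m2 = 3")
          case True
          have "phi (alpha u) = rho' t1" using P3[OF T1] Q3[OF True] by simp
          then have "phi (phi (alpha u)) = rho' x" using phi_rho'[OF tD(2)] at1 by simp
          then have "phi (phi (phi (alpha u))) = alpha x" using phi_rho'[OF x] by simp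
          then have "phi (phi (phi (phi (alpha b3)))) = alpha x" using au by simp
          then show ?thesis by (simp add: b1_def b2_def b3_def)
        next
          case False
          then obtain r2 where r2: "r2 \<in> D" "fs r2 = 3" "phi r2 = alpha g" using Q4 dm2 by blast
          have "fs (phi r2) = 3" using r2 fs_phi[of r2] by simp
          then have "fs (rho' t1) = 3" using r2(3) P3[OF T1] by simp
          then show ?thesis using bigt1 by simp
        qed
      next
        case F1: False
        then have P: "fs (alpha g) = 3" "phi (alpha g) = alpha (rho' t1)" using P4 dt1 by auto
        show ?thesis
        proof (cases "dg m2 = 3")
          case True
          have "fs (alpha g) = fs (alpha u)" using Q3[OF True] uD by simp
          then show ?thesis using P bigau by simp
        next
          case False
          then obtain r2 where r2: "r2 \<in> D" "fs r2 = 3" "phi r2 = alpha g" "alpha r2 = phi (alpha u)"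
            using Q4 dm2 by blast
          define a where "a = alpha (rho' t1)"
          have aD: "a \<in> D" using tD a_def by simp
          have "phi (phi (phi r2)) = r2" using fs3_phi r2 by blast
          then have pa: "phi a = r2" using r2(3) P(2) a_def by simp
          have "fs (alpha (phi a)) \<ge> 20" using pa r2(4) bigau uD by simp
          moreover have "fs (alpha a) \<ge> 20" using bigt1 tD a_def by simp
          ultimately show ?thesis using lemC[OF aD] by blast
        qed
      qed
    qed
  qed
qed

end



context pcc begin

definition Good where
  "Good z \<longleftrightarrow> z \<in> D \<and> fs z = 4 \<and> fs (alpha z) \<ge> 20 \<and> fs (alpha (phi (phi z))) \<ge> 20"

lemma Good_D: "Good z \<Longrightarrow> z \<in> D" by (simp add: Good_def)

lemma Q1: assumes g: "Good z" shows "fs (rho z) = 4"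
proof -
  have z: "z \<in> D" "fs z = 4" "fs (alpha z) \<ge> 20" "fs (alpha (phi (phi z))) \<ge> 20" using g Good_def by auto
  have ineq: "1 / real (fs (alpha z)) + 1 / real (fs z) + 1 / real (fs (rho z)) > 1/2"
    using lemD[OF z(1) z(3)] z(2) by simp
  have "1 / real (fs (alpha z)) \<le> 1/20" using inv_le z by auto
  then have "1 / 5 < 1 / real (fs (rho z))" using ineq z(2) by simp
  then have "fs (rho z) < 5" using inv_gt_imp[of 5 "fs (rho z)"] by simp
  moreover have "fs (rho z) \<noteq> 3" using lemE[OF z(1) _ z(3) z(4)] z(2) by simp
  moreover have "fs (rho z) \<ge> 3" using fs3 z by simp
  ultimately show ?thesis by simp
qed

lemma Good_phi4: "Good z \<Longrightarrow> phi (phi (phi (phi z))) = z"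
  using fs4_phi Good_def by blast

lemma Q_shift: assumes g: "Good z" shows "Good (phi (phi z))"
  using g Good_phi4[OF g] unfolding Good_def by simp

lemma Q2: assumes g: "Good z" shows "fs (alpha (phi (phi (phi z)))) = 4"
  using Q1[OF Q_shift[OF g]] alpha_phi Good_D[OF g] by simp

lemma Q3:
  assumes g: "Good z"
  defines "q \<equiv> alpha (phi (alpha z))"
  shows "Good q \<and> alpha q = phi (alpha z) \<and> orb phi (alpha (phi (phi q))) = orb phi (alpha (phi (phi z)))
     \<and> phi q = alpha (phi (phi (phi z)))"
proof -
  have z: "z \<in> D" "fs z = 4" "fs (alpha z) \<ge> 20" "fs (alpha (phi (phi z))) \<ge> 20" using g Good_def by auto
  define b3 where "b3 = phi (phi (phi z))"
  have b3D: "b3 \<in> D" using z b3_def by simp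
  have pb3: "phi b3 = z" using Good_phi4[OF g] b3_def by simp
  have fb3: "fs b3 = 4" using z b3_def by simp
  have r3: "rho (rho (rho b3)) = b3" using lemD'[OF b3D] pb3 z fb3 by simp
  have rb3: "rho b3 = alpha z" using alpha_phi[OF b3D] pb3 by simp
  have qe: "q = rho (rho b3)" using rb3 z by (simp add: q_def alpha_phi)
  have qD: "q \<in> D" using qe b3D by simp
  have pq: "phi q = alpha b3" using qe r3 by (simp add: phi_eq)
  have fq: "fs q = 4" using fs_phi[OF qD] pq Q2[OF g] b3_def by simp
  have aq: "alpha q = phi (alpha z)" using z by (simp add: q_def)
  have baq: "fs (alpha q) \<ge> 20" using aq z by simp
  define z2 where "z2 = phi (phi z)"
  have g2: "Good z2" using Q_shift[OF g] z2_def by simp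
  have z2D: "z2 \<in> D" using g2 Good_D by blast
  have rz2: "rho z2 = alpha b3" using alpha_phi[OF z2D] b3_def z2_def by simp
  have "rho (rho z2) = rho' z2" using lemD[OF z2D] g2 unfolding Good_def by simp
  then have rab3: "rho (alpha b3) = rho' z2" using rz2 by simp
  have apq: "alpha (phi (phi q)) = rho' z2" using pq rab3 z2D by (simp add: phi_eq)
  have "orb phi (rho' z2) = orb phi (alpha z2)"
    using P.orb_f[of "rho' z2"] phi_rho'[OF z2D] z2D by simp
  then have o2: "orb phi (alpha (phi (phi q))) = orb phi (alpha (phi (phi z)))" using apq z2_def by simp
  have "fs (alpha (phi (phi q))) \<ge> 20" using o2 z(4) unfolding fs_def by simp
  then have "Good q" using qD fq baq Good_def by simp
  then show ?thesis using aq o2 pq b3_def by simp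
qed

lemma Q4:
  assumes g: "Good z"
  shows "phi (rho z) = alpha (rho' z) \<and> orb phi (rho' z) = orb phi (alpha z)"
proof -
  have z: "z \<in> D" "fs z = 4" "fs (alpha z) \<ge> 20" using g Good_def by auto
  have "rho (rho z) = rho' z" using lemD[OF z(1) z(3)] z(2) by simp
  then have "phi (rho z) = alpha (rho' z)" by (simp add: phi_eq)
  moreover have "orb phi (rho' z) = orb phi (alpha z)"
    using P.orb_f[of "rho' z"] phi_rho'[OF z(1)] z(1) by simp
  ultimately show ?thesis by simp
qed

lemma Qall:
  assumes g: "Good z" and s: "s \<in> orb phi (alpha z)"
  shows "Good (alpha s) \<and> orb phi (alpha (phi (phi (alpha s)))) = orb phi (alpha (phi (phi z)))"
proof -
  have zD: "z \<in> D" using g Good_D by blast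
  have claim: "Good (alpha ((phi^^n) (alpha z))) \<and>
     orb phi (alpha (phi (phi (alpha ((phi^^n) (alpha z)))))) = orb phi (alpha (phi (phi z)))" for n
  proof (induction n)
    case 0
    then show ?case using g zD by simp
  next
    case (Suc n)
    define w where "w = alpha ((phi^^n) (alpha z))"
    have wD: "w \<in> D" using zD P.funpow_in w_def by simp
    have gw: "Good w" using Suc w_def by simp
    have Q: "Good (alpha (phi (alpha w))) \<and> orb phi (alpha (phi (phi (alpha (phi (alpha w)))))) = orb phi (alpha (phi (phi w)))"
      using Q3[OF gw] by (simp add: Let_def) (metis Q3[OF gw] alpha_alpha alpha_in phi_in wD)
    have e: "alpha (phi (alpha w)) = alpha ((phi^^Suc n) (alpha z))"
      using zD P.funpow_in by (simp add: w_def)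
    have "alpha (alpha (phi (alpha w))) = phi (alpha w)" using wD by simp
    then show ?case using Q e Suc gw w_def wD
      by (metis alpha_alpha alpha_in phi_in)
  qed
  obtain n where n: "s = (phi^^n) (alpha z)" using s unfolding orb_def by auto
  then show ?thesis using claim[of n] n by simp
qed

lemma orb4: "z \<in> D \<Longrightarrow> fs z = 4 \<Longrightarrow> orb phi z = {z, phi z, phi (phi z), phi (phi (phi z))}"
proof -
  assume z: "z \<in> D" "fs z = 4"
  have "P.per z = 4" using z P.card_orb fs_def by simp
  then have "orb phi z = (\<lambda>i. (phi^^i) z) ` {..<4}" using P.orb_eq z by simp
  also have "{..<4::nat} = {0,1,2,3}" by auto
  finally show ?thesis by (simp add: eval_nat_numeral)
qed

lemma phi_in_orb: "w \<in> D \<Longrightarrow> y \<in> orb phi w \<Longrightarrow> phi y \<in> orb phi w"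
  using P.orb_eqI P.f_in_orb by metis

lemma in_orb_iff: "w \<in> D \<Longrightarrow> y \<in> D \<Longrightarrow> y \<in> orb phi w \<longleftrightarrow> orb phi y = orb phi w"
  using P.orb_mem_eq by blast

end

locale qpcc = pcc + fixes z0 assumes g0: "Good z0"
begin

definition "sg = orb phi (alpha z0)"
definition "sg' = orb phi (alpha (phi (phi z0)))"
definition "K = (\<lambda>s. orb phi (alpha s)) ` sg"
definition "U = sg \<union> sg'"

lemma z0D: "z0 \<in> D" using g0 Good_D by blast
lemma sgD: "s \<in> sg \<Longrightarrow> s \<in> D" using P.orb_sub[of "alpha z0"] z0D sg_def by auto
lemma sg'D: "s \<in> sg' \<Longrightarrow> s \<in> D" using P.orb_sub[of "alpha (phi (phi z0))"] z0D sg'_def by auto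
lemma UD: "s \<in> U \<Longrightarrow> s \<in> D" using sgD sg'D U_def by auto

lemma G1: "s \<in> sg \<Longrightarrow> Good (alpha s) \<and> orb phi (alpha (phi (phi (alpha s)))) = sg'"
  using Qall[OF g0] sg_def sg'_def by simp

lemma G2: "s \<in> sg' \<Longrightarrow> Good (alpha s) \<and> orb phi (alpha (phi (phi (alpha s)))) = sg"
  using Qall[OF Q_shift[OF g0]] Good_phi4[OF g0] sg_def sg'_def by simp

lemma orb_sg: "s \<in> sg \<Longrightarrow> orb phi s = sg" using P.orb_eqI z0D sg_def by simp
lemma orb_sg': "s \<in> sg' \<Longrightarrow> orb phi s = sg'" using P.orb_eqI z0D sg'_def by simp

lemma fs_U: "s \<in> U \<Longrightarrow> fs s \<ge> 20"
proof -
  assume s: "s \<in> U"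
  have "fs (alpha z0) \<ge> 20" "fs (alpha (phi (phi z0))) \<ge> 20" using g0 Good_def by auto
  then have c: "card sg \<ge> 20" "card sg' \<ge> 20" unfolding fs_def sg_def sg'_def by auto
  show ?thesis
  proof (cases "s \<in> sg")
    case True then show ?thesis using orb_sg c unfolding fs_def by simp
  next
    case False then have "s \<in> sg'" using s U_def by simp
    then show ?thesis using orb_sg' c unfolding fs_def by simp
  qed
qed

lemma KQ: "Q \<in> K \<Longrightarrow> \<exists>s\<in>sg. Q = orb phi (alpha s) \<and> Good (alpha s)"
  using G1 K_def by auto

lemma fs_K: "Q \<in> K \<Longrightarrow> y \<in> Q \<Longrightarrow> fs y = 4"
proof -
  assume Q: "Q \<in> K" and y: "y \<in> Q"
  obtain s where s: "s \<in> sg" "Q = orb phi (alpha s)" "Good (alpha s)" using KQ Q by blast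
  show ?thesis using fs_eq[of "alpha s" y] s y Good_def by simp
qed

lemma KD: "Q \<in> K \<Longrightarrow> Q \<subseteq> D"
proof -
  assume "Q \<in> K"
  then obtain s where s: "s \<in> sg" "Q = orb phi (alpha s)" using K_def by auto
  then show ?thesis using P.orb_sub[of "alpha s"] sgD[of s] by simp
qed

lemma UK_disj: "y \<in> U \<Longrightarrow> Q \<in> K \<Longrightarrow> y \<notin> Q"
  using fs_U fs_K by fastforce

lemma sg_in: "s \<in> D \<Longrightarrow> orb phi s = sg \<Longrightarrow> s \<in> sg" using P.self_in by metis
lemma sg'_in: "s \<in> D \<Longrightarrow> orb phi s = sg' \<Longrightarrow> s \<in> sg'" using P.self_in by metis

lemma alpha_U: "y \<in> U \<Longrightarrow> \<exists>Q\<in>K. alpha y \<in> Q"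
proof -
  assume y: "y \<in> U"
  show ?thesis
  proof (cases "y \<in> sg")
    case True
    then show ?thesis using K_def P.self_in by blast
  next
    case False
    then have y': "y \<in> sg'" using y U_def by simp
    have yD: "y \<in> D" using sg'D y' by blast
    define s where "s = alpha (phi (phi (alpha y)))"
    have sD: "s \<in> D" using yD s_def by simp
    have "s \<in> sg" using G2[OF y'] sg_in sD s_def by simp
    moreover have "orb phi (alpha s) = orb phi (alpha y)"
      using yD P.orb_f by (simp add: s_def)
    ultimately show ?thesis using K_def P.self_in by (metis image_eqI)
  qed
qed

lemma quad_parts:
  assumes s: "s \<in> sg"
  defines "z \<equiv> alpha s"
  shows "alpha z \<in> sg \<and> alpha (phi (phi z)) \<in> sg' \<and> (\<exists>Q\<in>K. alpha (phi z) \<in> Q) \<and>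
    (\<exists>Q\<in>K. alpha (phi (phi (phi z))) \<in> Q) \<and> rho' z \<in> sg \<and> rho' (phi (phi z)) \<in> sg'"
proof -
  have sD: "s \<in> D" using sgD s by blast
  have g: "Good z" using G1 s z_def by simp
  have zD: "z \<in> D" using sD z_def by simp
  have az: "alpha z = s" using sD z_def by simp
  have o2: "orb phi (alpha (phi (phi z))) = sg'" using G1 s z_def by simp
  have c1: "alpha (phi (phi z)) \<in> sg'" using o2 sg'_in zD by simp
  have q4: "phi (rho z) = alpha (rho' z) \<and> orb phi (rho' z) = orb phi (alpha z)" using Q4[OF g] .
  have r'z: "rho' z \<in> sg" using q4 az orb_sg[OF s] sg_in zD by simp
  have c2: "\<exists>Q\<in>K. alpha (phi z) \<in> Q"
  proof -
    have "orb phi (rho z) = orb phi (alpha (rho' z))" using q4 P.orb_f[of "rho z"] zD by simp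
    then have "rho z \<in> orb phi (alpha (rho' z))" using P.self_in by metis
    then show ?thesis using r'z K_def alpha_phi zD by auto
  qed
  have q3: "phi (alpha (phi (alpha z))) = alpha (phi (phi (phi z)))" using Q3[OF g] by simp
  have c3: "\<exists>Q\<in>K. alpha (phi (phi (phi z))) \<in> Q"
  proof -
    have "phi s \<in> sg" using phi_in_orb z0D s sg_def by simp
    moreover have "alpha (phi (phi (phi z))) \<in> orb phi (alpha (phi s))"
      using q3 az P.f_in_orb by metis
    ultimately show ?thesis using K_def by auto
  qed
  have c4: "rho' (phi (phi z)) \<in> sg'"
  proof -
    have "orb phi (rho' (phi (phi z))) = orb phi (alpha (phi (phi z)))"
      using P.orb_f[of "rho' (phi (phi z))"] phi_rho'[of "phi (phi z)"] zD by simp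
    then show ?thesis using o2 sg'_in zD by simp
  qed
  show ?thesis using az s c1 c2 c3 r'z c4 by blast
qed

definition "S = U \<union> \<Union>K"

lemma S_alpha: "y \<in> S \<Longrightarrow> alpha y \<in> S"
proof -
  assume y: "y \<in> S"
  show ?thesis
  proof (cases "y \<in> U")
    case True then show ?thesis using alpha_U S_def by blast
  next
    case False
    then obtain Q where Q: "Q \<in> K" "y \<in> Q" using y S_def by auto
    obtain s where s: "s \<in> sg" "Q = orb phi (alpha s)" "Good (alpha s)" using KQ Q by blast
    define z where "z = alpha s"
    have zD: "z \<in> D" using s Good_D z_def by blast
    have "y \<in> {z, phi z, phi (phi z), phi (phi (phi z))}" using orb4 zD s Q Good_def z_def by auto
    then show ?thesis using quad_parts[OF s(1)] z_def unfolding S_def U_def by blast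
  qed
qed

lemma S_phi: "y \<in> S \<Longrightarrow> phi y \<in> S"
proof -
  assume y: "y \<in> S"
  have "y \<in> sg \<Longrightarrow> phi y \<in> sg" using phi_in_orb z0D sg_def by simp
  moreover have "y \<in> sg' \<Longrightarrow> phi y \<in> sg'" using phi_in_orb z0D sg'_def by simp
  moreover have "Q \<in> K \<Longrightarrow> y \<in> Q \<Longrightarrow> phi y \<in> Q" for Q
    using phi_in_orb K_def sgD by auto
  ultimately show ?thesis using y unfolding S_def U_def by blast
qed

lemma SD: "S \<subseteq> D" using UD KD S_def by auto

lemma S_rho: "y \<in> S \<Longrightarrow> rho y \<in> S"
  using S_alpha S_phi alpha_phi SD by (metis subsetD)

lemma S_eq: "S = D"
proof
  show "S \<subseteq> D" using SD .
next
  show "D \<subseteq> S"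
  proof
    fix y assume yD: "y \<in> D"
    have a0: "alpha z0 \<in> S" using P.self_in S_def U_def sg_def by auto
    have conn: "map_connected D alpha rho" using SSM by (simp add: spherical_simple_map_def)
    have "(alpha z0, y) \<in> ({(z, alpha z) | z. z \<in> D} \<union> {(z, rho z) | z. z \<in> D})\<^sup>*"
      using conn yD z0D unfolding map_connected_def by simp
    then show "y \<in> S"
    proof (induction rule: rtrancl_induct)
      case base then show ?case using a0 .
    next
      case (step b c) then show ?case using S_alpha S_rho by blast
    qed
  qed
qed

lemma D_cases: "y \<in> D \<Longrightarrow> y \<in> U \<or> (\<exists>Q\<in>K. y \<in> Q)"
  using S_eq S_def by auto

lemma vU: "y \<in> D \<Longrightarrow> \<exists>w\<in>U. w \<in> orb rho y"
proof -
  assume yD: "y \<in> D"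
  show ?thesis
  proof (cases "y \<in> U")
    case True then show ?thesis using R.self_in by blast
  next
    case False
    then obtain Q where Q: "Q \<in> K" "y \<in> Q" using D_cases yD by blast
    obtain s where s: "s \<in> sg" "Q = orb phi (alpha s)" "Good (alpha s)" using KQ Q by blast
    define z where "z = alpha s"
    have zD: "z \<in> D" using s Good_D z_def by blast
    have sD: "s \<in> D" using sgD s by blast
    have qp: "alpha z \<in> sg" "alpha (phi (phi z)) \<in> sg'" "rho' z \<in> sg" "rho' (phi (phi z)) \<in> sg'"
      using quad_parts[OF s(1)] z_def by auto
    have y4: "y \<in> {z, phi z, phi (phi z), phi (phi (phi z))}" using orb4 zD s Q Good_def z_def by auto
    have p4: "phi (phi (phi (phi z))) = z" using Good_phi4 s z_def by blast
    have yD: "y \<in> D" using zD y4 by auto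
    { assume "y = z"
      then have "rho' y \<in> U" using qp(3) U_def by simp
      then have ?thesis using rho'_orb[OF yD] by blast }
    moreover
    { assume e: "y = phi z"
      then have "rho y = alpha (phi (phi z))" using alpha_phi zD by simp
      then have "rho y \<in> U" using qp(2) U_def by simp
      then have ?thesis using rho_orb[of y] by blast }
    moreover
    { assume "y = phi (phi z)"
      then have "rho' y \<in> U" using qp(4) U_def by simp
      then have ?thesis using rho'_orb[OF yD] by blast }
    moreover
    { assume "y = phi (phi (phi z))"
      then have "rho y = alpha z" using alpha_phi[of "phi (phi (phi z))"] zD p4 by simp
      then have "rho y \<in> U" using qp(1) U_def by simp
      then have ?thesis using rho_orb[of y] by blast }
    ultimately show ?thesis using y4 by blast
  qed
qed

lemma U_phi: "w \<in> U \<Longrightarrow> phi w \<in> U"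
  using phi_in_orb z0D sg_def sg'_def U_def by auto

lemma dgU: "w \<in> U \<Longrightarrow> dg w = 3"
proof -
  assume w: "w \<in> U"
  have wD: "w \<in> D" using UD w by blast
  obtain Q where Q: "Q \<in> K" "alpha (phi w) \<in> Q" using alpha_U U_phi w by blast
  have "fs (rho w) = 4" using fs_K Q alpha_phi wD by simp
  moreover have "rho w \<noteq> w" using rho_neq wD by blast
  ultimately show ?thesis using VD[OF wD R.self_in rho_orb _ fs_U[OF w]] by simp
qed

lemma vert: "v \<in> map_verts D rho \<Longrightarrow> card v = 3 \<and> (\<exists>w\<in>U. v = orb rho w)"
proof -
  assume "v \<in> map_verts D rho"
  then obtain y where y: "y \<in> D" "v = orb rho y" unfolding map_verts_def by auto
  obtain w where w: "w \<in> U" "w \<in> orb rho y" using vU y by blast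
  have "orb rho w = v" using R.orb_eqI y w by simp
  then show ?thesis using dgU w dg_def by auto
qed

lemma U_iff: "x \<in> D \<Longrightarrow> orb phi x \<in> {sg, sg'} \<longleftrightarrow> x \<in> U"
proof -
  assume x: "x \<in> D"
  show ?thesis
  proof
    assume "orb phi x \<in> {sg, sg'}"
    then show "x \<in> U" using sg_in[OF x] sg'_in[OF x] U_def by auto
  next
    assume "x \<in> U"
    then show "orb phi x \<in> {sg, sg'}" using orb_sg orb_sg' U_def by auto
  qed
qed

lemma vertA: "v \<in> map_verts D rho \<Longrightarrow> card {x\<in>v. orb phi x \<in> {sg, sg'}} = 1"
proof -
  assume v: "v \<in> map_verts D rho"
  obtain w where w: "w \<in> U" "v = orb rho w" using vert v by blast
  have wD: "w \<in> D" using UD w by blast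
  have "{x\<in>v. orb phi x \<in> {sg, sg'}} = {w}"
  proof
    show "{w} \<subseteq> {x\<in>v. orb phi x \<in> {sg, sg'}}" using w U_iff wD R.self_in by auto
    show "{x\<in>v. orb phi x \<in> {sg, sg'}} \<subseteq> {w}"
    proof
      fix x assume x: "x \<in> {x\<in>v. orb phi x \<in> {sg, sg'}}"
      have xD: "x \<in> D" using x w R.orb_sub wD by auto
      have "x \<in> U" using U_iff xD x by blast
      then have "fs x \<ge> 20" using fs_U by blast
      moreover have xin: "x \<in> orb rho w" using x w by simp
      ultimately have "x = w" using VB[OF wD xin R.self_in _ _ fs_U[OF w(1)]] by blast
      then show "x \<in> {w}" by simp
    qed
  qed
  then show ?thesis by simp
qed

end




context qpcc begin

lemma cD_V: "card D = 3 * card (map_verts D rho)"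
proof -
  have "card D = sum card (map_verts D rho)" unfolding map_verts_def using R.card_sum by simp
  also have "\<dots> = sum (\<lambda>v. 3) (map_verts D rho)" using vert by (intro sum.cong) auto
  finally show ?thesis by simp
qed

lemma cD_E: "card D = 2 * card (map_edges D alpha)"
proof -
  have "card D = sum card (map_edges D alpha)" unfolding map_edges_def using A.card_sum by simp
  also have "\<dots> = sum (\<lambda>v. 2) (map_edges D alpha)"
  proof (intro sum.cong)
    fix e assume "e \<in> map_edges D alpha"
    then obtain x where x: "x \<in> D" "e = orb alpha x" unfolding map_edges_def by auto
    then have "alpha x \<noteq> x" using alpha_ne by simp
    then show "card e = 2" using orb_alpha x by simp
  qed simp
  finally show ?thesis by simp
qed

lemma K_disj: "Q1 \<in> K \<Longrightarrow> Q2 \<in> K \<Longrightarrow> Q1 \<noteq> Q2 \<Longrightarrow> Q1 \<inter> Q2 = {}"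
proof -
  assume Q: "Q1 \<in> K" "Q2 \<in> K" "Q1 \<noteq> Q2"
  obtain s1 where s1: "s1 \<in> sg" "Q1 = orb phi (alpha s1)" using Q K_def by auto
  obtain s2 where s2: "s2 \<in> sg" "Q2 = orb phi (alpha s2)" using Q K_def by auto
  have "alpha s1 \<in> D" "alpha s2 \<in> D" using s1 s2 sgD by auto
  then show ?thesis using P.orb_disj s1 s2 Q(3) by blast
qed

lemma finK: "finite K" using K_def P.finite_orb z0D sg_def by simp

lemma cardQ: "Q \<in> K \<Longrightarrow> card Q = 4"
proof -
  assume "Q \<in> K"
  then obtain s where s: "s \<in> sg" "Q = orb phi (alpha s)" "Good (alpha s)" using KQ by blast
  then show ?thesis using Good_def fs_def by simp
qed

lemma finQ: "Q \<in> K \<Longrightarrow> finite Q" using KD fin finite_subset by blast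

lemma c_UK: "card (\<Union>K) = 4 * card K"
proof -
  have "card (\<Union>K) = sum card K"
    by (rule card_Union_disjoint) (use K_disj finQ in \<open>auto simp: pairwise_def disjnt_def\<close>)
  also have "\<dots> = sum (\<lambda>Q. 4) K" using cardQ by (intro sum.cong) auto
  finally show ?thesis by simp
qed

lemma D_split: "D = U \<union> \<Union>K" using S_eq S_def by simp

lemma UK: "U \<inter> \<Union>K = {}" using UK_disj by blast

lemma c_D: "card D = card U + card (\<Union>K)"
proof -
  have "finite U" "finite (\<Union>K)" using D_split fin by (auto intro: finite_subset)
  then show ?thesis using D_split UK card_Un_disjoint by metis
qed

lemma QB:
  assumes Q: "Q \<in> K"
  shows "card (Q \<inter> alpha ` U) = 2"
proof -
  obtain s where s: "s \<in> sg" "Q = orb phi (alpha s)" "Good (alpha s)" using KQ Q by blast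
  define z where "z = alpha s"
  have zD: "z \<in> D" using s Good_D z_def by blast
  have fz: "fs z = 4" using s Good_def z_def by simp
  have Q4: "Q = {z, phi z, phi (phi z), phi (phi (phi z))}" using orb4 zD fz s z_def by simp
  have qp: "alpha z \<in> sg" "alpha (phi (phi z)) \<in> sg'" "\<exists>Q\<in>K. alpha (phi z) \<in> Q"
      "\<exists>Q\<in>K. alpha (phi (phi (phi z))) \<in> Q"
    using quad_parts[OF s(1)] z_def by auto
  have memB: "y \<in> D \<Longrightarrow> y \<in> alpha ` U \<longleftrightarrow> alpha y \<in> U" for y
    using UD by (auto intro: image_eqI[of y alpha "alpha y"])
  have n1: "alpha (phi z) \<notin> U" using qp(3) UK_disj by blast
  have n3: "alpha (phi (phi (phi z))) \<notin> U" using qp(4) UK_disj by blast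
  have "Q \<inter> alpha ` U = {z, phi (phi z)}"
    using Q4 memB zD n1 n3 qp(1,2) U_def by auto
  moreover have "phi (phi z) \<noteq> z" using P.card_ge3_neq[OF zD] fz fs_def by simp
  then have "z \<noteq> phi (phi z)" by metis
  ultimately show ?thesis by simp
qed

lemma c_U: "card U = 2 * card K"
proof -
  have inj: "inj_on alpha U" using UD alpha_inj by (meson inj_onI)
  have "alpha ` U \<subseteq> \<Union>K" using alpha_U by blast
  then have e: "alpha ` U = (\<Union>Q\<in>K. Q \<inter> alpha ` U)" by blast
  have "card (\<Union>Q\<in>K. Q \<inter> alpha ` U) = (\<Sum>Q\<in>K. card (Q \<inter> alpha ` U))"
    by (rule card_UN_disjoint) (use finK finQ K_disj in auto)
  also have "\<dots> = (\<Sum>Q\<in>K. 2)" using QB by (intro sum.cong) auto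
  finally have "card (alpha ` U) = 2 * card K" using e by simp
  then show ?thesis using card_image[OF inj] by simp
qed

lemma faces: "map_faces D alpha rho = {sg, sg'} \<union> K"
proof
  show "map_faces D alpha rho \<subseteq> {sg, sg'} \<union> K"
  proof
    fix f assume "f \<in> map_faces D alpha rho"
    then obtain y where y: "y \<in> D" "f = orb phi y" unfolding map_faces_def by auto
    show "f \<in> {sg, sg'} \<union> K"
    proof (cases "y \<in> U")
      case True then show ?thesis using U_iff y by auto
    next
      case False
      then obtain Q where Q: "Q \<in> K" "y \<in> Q" using D_cases y by blast
      obtain s where s: "s \<in> sg" "Q = orb phi (alpha s)" using Q K_def by auto
      have "orb phi y = Q" using P.orb_eqI s Q sgD by simp
      then show ?thesis using y Q by simp
    qed
  qed
next
  show "{sg, sg'} \<union> K \<subseteq> map_faces D alpha rho"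
  proof
    fix f assume f: "f \<in> {sg, sg'} \<union> K"
    have "sg \<in> map_faces D alpha rho" using z0D unfolding sg_def map_faces_def by auto
    moreover have "sg' \<in> map_faces D alpha rho" using z0D unfolding sg'_def map_faces_def by auto
    moreover have "Q \<in> K \<Longrightarrow> Q \<in> map_faces D alpha rho" for Q
      using sgD unfolding K_def map_faces_def by auto
    ultimately show "f \<in> map_faces D alpha rho" using f by blast
  qed
qed

lemma card_sg: "card sg \<ge> 20" using g0 unfolding Good_def fs_def sg_def by simp
lemma card_sg': "card sg' \<ge> 20" using g0 unfolding Good_def fs_def sg'_def by simp

lemma AK: "{sg, sg'} \<inter> K = {}"
proof -
  have "sg \<notin> K" using cardQ card_sg by fastforce
  moreover have "sg' \<notin> K" using cardQ card_sg' by fastforce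
  ultimately show ?thesis by blast
qed

lemma sg_ne: "sg \<noteq> sg'"
proof -
  have eu: "int (card (map_verts D rho)) - int (card (map_edges D alpha))
       + int (card (map_faces D alpha rho)) = 2"
    using SSM by (simp add: spherical_simple_map_def)
  have cf: "card (map_faces D alpha rho) = card {sg, sg'} + card K"
    using faces AK finK card_Un_disjoint by (metis finite.emptyI finite.insertI)
  have cd: "card D = 6 * card K" using c_D c_U c_UK by simp
  have "card (map_verts D rho) = 2 * card K" using cD_V cd by simp
  moreover have "card (map_edges D alpha) = 3 * card K" using cD_E cd by simp
  ultimately have "card {sg, sg'} = 2" using eu cf by simp
  then show ?thesis by (metis card_1_singletonE card_2_iff doubleton_eq_iff insert_absorb2 is_singletonI' is_singleton_altdef)
qed

lemma inj_sg: "inj_on (\<lambda>s. orb phi (alpha s)) sg"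
proof (rule inj_onI)
  fix s1 s2 assume s: "s1 \<in> sg" "s2 \<in> sg" and eq: "orb phi (alpha s1) = orb phi (alpha s2)"
  define z where "z = alpha s1"
  have g: "Good z" using G1 s z_def by simp
  have zD: "z \<in> D" using g Good_D by blast
  have Q4: "orb phi z = {z, phi z, phi (phi z), phi (phi (phi z))}" using orb4 zD g Good_def by simp
  have s2D: "s2 \<in> D" using sgD s by blast
  have "alpha s2 \<in> orb phi z" using eq P.self_in z_def by metis
  then have c: "alpha s2 \<in> {z, phi z, phi (phi z), phi (phi (phi z))}" using Q4 by simp
  have qp: "alpha (phi (phi z)) \<in> sg'" "\<exists>Q\<in>K. alpha (phi z) \<in> Q" "\<exists>Q\<in>K. alpha (phi (phi (phi z))) \<in> Q"
    using quad_parts[OF s(1)] z_def by auto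
  have s2U: "s2 \<in> U" using s U_def by simp
  have "alpha s2 \<noteq> phi z"
  proof
    assume "alpha s2 = phi z"
    then have "alpha (phi z) = s2" using s2D by (metis alpha_alpha)
    then show False using qp(2) UK_disj s2U by blast
  qed
  moreover have "alpha s2 \<noteq> phi (phi (phi z))"
  proof
    assume "alpha s2 = phi (phi (phi z))"
    then have "alpha (phi (phi (phi z))) = s2" using s2D by (metis alpha_alpha)
    then show False using qp(3) UK_disj s2U by blast
  qed
  moreover have "alpha s2 \<noteq> phi (phi z)"
  proof
    assume "alpha s2 = phi (phi z)"
    then have "s2 \<in> sg'" using qp(1) s2D by (metis alpha_alpha)
    then have "sg = sg'" using orb_sg orb_sg' s by metis
    then show False using sg_ne by simp
  qed
  ultimately have "alpha s2 = z" using c by blast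
  then show "s1 = s2" using s2D s sgD z_def by (metis alpha_alpha)
qed

lemma cK_sg: "card K = card sg" using card_image[OF inj_sg] K_def by simp

lemma cK_sg': "card sg' = card K"
proof -
  have "sg \<inter> sg' = {}"
  proof (rule ccontr)
    assume "sg \<inter> sg' \<noteq> {}"
    then obtain x where "x \<in> sg" "x \<in> sg'" by blast
    then show False using orb_sg orb_sg' sg_ne by metis
  qed
  moreover have "finite sg" "finite sg'" using fin sgD sg'D by (auto intro: finite_subset)
  ultimately have "card U = card sg + card sg'" using U_def card_Un_disjoint by metis
  then show ?thesis using c_U cK_sg by simp
qed

lemma prism: "is_prism D alpha rho"
  unfolding is_prism_def
proof (intro exI conjI)
  show "card K \<ge> 3" using cK_sg card_sg by simp
  show "{sg, sg'} \<subseteq> map_faces D alpha rho" using faces by blast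
  show "card {sg, sg'} = 2" using sg_ne by simp
  show "\<forall>f\<in>{sg, sg'}. card f = card K" using cK_sg cK_sg' by simp
  have mk: "map_faces D alpha rho - {sg, sg'} = K" using faces AK by blast
  show "card (map_faces D alpha rho - {sg, sg'}) = card K" using mk by simp
  show "\<forall>f\<in>map_faces D alpha rho - {sg, sg'}. card f = 4" using mk cardQ by simp
  show "card (map_verts D rho) = 2 * card K" using cD_V c_D c_U c_UK by simp
  show "\<forall>v\<in>map_verts D rho. card v = 3 \<and> card {x\<in>v. orb phi x \<in> {sg, sg'}} = 1"
    using vert vertA by simp
qed

end

lemma (in pcc) Good_prism: "Good z \<Longrightarrow> is_prism D alpha rho"
proof -
  assume "Good z"
  then interpret qpcc D alpha rho z by unfold_locales
  show ?thesis using prism .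
qed




context pcc begin

lemma edge_face:
  assumes e: "e \<in> map_edges D alpha" and f: "f \<in> map_faces D alpha rho" and k: "k \<in> map_faces D alpha rho"
    and ek: "e \<inter> k \<noteq> {}" and ef: "e \<inter> f \<noteq> {}" and ne: "k \<noteq> f"
  shows "\<exists>b\<in>D. orb phi b = k \<and> orb phi (alpha b) = f \<and> orb alpha b = e"
proof -
  obtain a where a: "a \<in> D" "e = orb alpha a" using e unfolding map_edges_def by auto
  obtain k0 where k0: "k0 \<in> D" "k = orb phi k0" using k unfolding map_faces_def by auto
  obtain f0 where f0: "f0 \<in> D" "f = orb phi f0" using f unfolding map_faces_def by auto
  obtain b where b: "b \<in> e" "b \<in> k" using ek by blast
  obtain c where c: "c \<in> e" "c \<in> f" using ef by blast
  have eab: "e = {a, alpha a}" using orb_alpha a by simp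
  have bD: "b \<in> D" "c \<in> D" using b c eab a by auto
  have ob: "orb phi b = k" using P.orb_eqI k0 b by simp
  have oc: "orb phi c = f" using P.orb_eqI f0 c by simp
  have "b \<noteq> c" using ob oc ne by auto
  then have "c = alpha b" using b c eab a by auto
  moreover have "orb alpha b = e" using A.orb_eqI a b by simp
  ultimately show ?thesis using bD ob oc by blast
qed

lemma main_contra:
  assumes bD: "b \<in> D" and b'D: "b' \<in> D" and kk: "orb phi b' = orb phi b" and k6: "fs b \<le> 6"
    and s1: "fs (alpha b) \<ge> 20" and s2: "fs (alpha b') \<ge> 20" and ne: "b \<noteq> b'"
  shows False
proof -
  define k where "k = fs b"
  have k3: "k \<ge> 3" using fs3 bD k_def by simp
  have fb': "fs b' = k" using kk k_def fs_def by simp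
  have "b' \<in> orb phi b" using kk P.self_in by metis
  then obtain j where j: "j < k" "b' = (phi^^j) b"
    using P.orb_eq[OF bD] P.card_orb[OF bD] k_def fs_def by auto
  have j0: "j \<noteq> 0"
  proof
    assume "j = 0" then have "b' = b" using j by simp
    then show False using ne by simp
  qed
  have pk: "(phi^^k) b = b" using fs_per bD k_def by simp
  have pj: "(phi^^(j + n)) b = (phi^^n) b'" for n
    using j funpow_add[of n j phi] by (simp add: add.commute)
  show False
  proof (cases "j = 1")
    case True
    then have "b' = phi b" using j by simp
    then show False using lemC[OF bD s1] s2 by simp
  next
    case J1: False
    show False
    proof (cases "j + 1 = k")
      case True
      then have "phi b' = b" using pj[of 1] pk by simp
      then show False using lemC[OF b'D s2] s1 by simp
    next
      case J2: False
      show False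
      proof (cases "j = 2")
        case True
        have bb: "b' = phi (phi b)" using True j by (simp add: eval_nat_numeral)
        show False
        proof (cases "k = 4")
          case True
          have "Good b" using Good_def bD True k_def s1 s2 bb by simp
          then have "is_prism D alpha rho" using Good_prism by blast
          then show False using PCC planar_PCC_def by blast
        next
          case False
          then have "fs b \<ge> 5" using k_def J2 \<open>j = 2\<close> j k3 by simp
          then show False using lemP[OF bD _ s1] s2 bb by simp
        qed
      next
        case J3: False
        show False
        proof (cases "j + 2 = k")
          case True
          then have "phi (phi b') = b" using pj[of 2] pk by (simp add: eval_nat_numeral)
          moreover have "fs b' \<ge> 5" using fb' True J1 J3 j0 by simp
          ultimately show False using lemP[OF b'D _ s2] s1 by simp
        next
          case False
          then have j3: "j = 3" "k = 6" using J1 J2 J3 j0 j k_def k6 by auto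
          have bb: "b' = phi (phi (phi b))" using j3 j by (simp add: eval_nat_numeral)
          have bb2: "phi (phi (phi b')) = b" using pj[of 3] pk j3 by (simp add: eval_nat_numeral)
          have H1: "phi (phi (phi (alpha b'))) = alpha b \<or> phi (phi (phi (phi (alpha b')))) = alpha b"
            using lemH[OF bD] j3 k_def s1 s2 bb by simp
          have H2: "phi (phi (phi (alpha b))) = alpha b' \<or> phi (phi (phi (phi (alpha b)))) = alpha b'"
            using lemH[OF b'D] j3 fb' s1 s2 bb2 by simp
          have abD: "alpha b \<in> D" using bD by simp
          have "(phi^^6) (alpha b) = alpha b \<or> (phi^^7) (alpha b) = alpha b \<or> (phi^^8) (alpha b) = alpha b"
            using H1 H2 by (auto simp: eval_nat_numeral)
          then have "fs (alpha b) \<le> 8"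
            using P.card_le[OF abD, of 6] P.card_le[OF abD, of 7] P.card_le[OF abD, of 8] fs_def by auto
          then show False using s1 by simp
        qed
      qed
    qed
  qed
qed

end

theorem lemma2p5:
  fixes D :: "'d set" and alpha rho :: "'d \<Rightarrow> 'd"
    and \<sigma> \<sigma>' \<kappa> e e' :: "'d set"
  assumes "planar_PCC D alpha rho"
    and "\<sigma> \<in> map_faces D alpha rho" and "\<sigma>' \<in> map_faces D alpha rho"
    and "\<kappa> \<in> map_faces D alpha rho"
    and "card \<sigma> \<ge> 20" and "card \<sigma>' \<ge> 20" and "card \<kappa> \<le> 6"
    and "e \<in> map_edges D alpha" and "e' \<in> map_edges D alpha"
    and "e \<inter> \<kappa> \<noteq> {}" and "e \<inter> \<sigma> \<noteq> {}"
    and "e' \<inter> \<kappa> \<noteq> {}" and "e' \<inter> \<sigma>' \<noteq> {}"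
  shows "\<sigma> = \<sigma>' \<and> e = e'"
proof -
  interpret pcc D alpha rho using assms(1) by unfold_locales
  have n1: "\<kappa> \<noteq> \<sigma>" using assms(5,7) by auto
  have n2: "\<kappa> \<noteq> \<sigma>'" using assms(6,7) by auto
  obtain b where b: "b \<in> D" "orb phi b = \<kappa>" "orb phi (alpha b) = \<sigma>" "orb alpha b = e"
    using edge_face[OF assms(8) assms(2) assms(4) assms(10) assms(11) n1] by blast
  obtain b' where b': "b' \<in> D" "orb phi b' = \<kappa>" "orb phi (alpha b') = \<sigma>'" "orb alpha b' = e'"
    using edge_face[OF assms(9) assms(3) assms(4) assms(12) assms(13) n2] by blast
  show ?thesis
  proof (cases "b = b'")
    case True then show ?thesis using b b' by simp
  next
    case False
    have "fs b \<le> 6" using b assms(7) fs_def by simp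
    moreover have "fs (alpha b) \<ge> 20" "fs (alpha b') \<ge> 20" using b b' assms(5,6) fs_def by auto
    ultimately have False using main_contra[OF b(1) b'(1)] b b' False by simp
    then show ?thesis ..
  qed
qed


end
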